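(* Let $\Pi$ be the node-edge-checkable problem encoding maximal matching defined below, and $\Pi^*$ its node-list variant. Then for every valid input instance $(S,h_{\mathrm{in}})$ of $\Pi^*$ (on any finite semi-graph $S$), $\Pi^*$ admits a valid solution.
   Context: Semi-graph: a bipartite graph $S=(A\sqcup B,C)$ with every $b\in B$ of degree at most $2$; $A$ = nodes, $B$ = edges, $C$ = half-edges (incident node–edge pairs); degree of a node / rank of an edge = its degree in $S$. Node-edge-checkable problem $\Pi=(\Sigma,\mathcal N_\Pi,\mathcal E_\Pi)$: $\mathcal N_\Pi^i$ ($i\ge 0$) and $\mathcal E_\Pi^i$ ($i\in\{0,1,2\}$) are collections of cardinality-$i$ multisets over $\Sigma$. The problem $\Pi$: $\Sigma=\{M,P,O,D\}$. For each $i\ge 0$, $\mathcal N_\Pi^i$ consists of all cardinality-$i$ multisets $\{\chi_1,\dots,\chi_i\}$ over $\Sigma$ such that either (i) exactly one $\chi_j$ equals $M$ and all others lie in $\{P,O,D\}$, or (ii) all $\chi_k$ lie in $\{O,D\}$. $\mathcal E_\Pi^0=\{\emptyset\}$, $\mathcal E_\Pi^1=\{\{D\}\}$, $\mathcal E_\Pi^2=\{\{P,O\},\{M,M\},\{P,P\}\}$. Node-list variant $\Pi^*$: for $i,j\ge0$ and $\psi\in\mathcal N_\Pi^j$, $\mathcal N^i_{\Pi,\psi}$ is the set of cardinality-$i$ multisets $\chi$ over $\Sigma$ with $\chi\uplus\psi\in\mathcal N_\Pi^{i+j}$, and $\mathcal L^i=\{\mathcal N^i_{\Pi,\psi}:\psi\in\mathcal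 N_\Pi^j\text{ for some }j\ge0\}$. A valid input instance is $(S,h_{\mathrm{in}})$ with $h_{\mathrm{in}}(v)\in\mathcal L^{\deg(v)}$ for each node $v$. A valid solution is $h_{\mathrm{out}}:H(S)\to\Sigma$ such that for each node $v$ the multiset of labels on its incident half-edges lies in $h_{\mathrm{in}}(v)$, and for each edge $e$ the multiset of labels on its incident half-edges lies in $\mathcal E_\Pi^{\mathrm{rank}(e)}$. *)

theory Defs
  imports Main "HOL-Library.Multiset"
begin

text \<open>Semi-graph S = (A \<sqinter> B, C): nodes A (type 'a), edges B (type 'b),
  half-edges C \<subseteq> A \<times> B; every edge has degree at most 2.\<close>
definition semigraph :: "'a set \<Rightarrow> 'b set \<Rightarrow> ('a \<times> 'b) set \<Rightarrow> bool" where
  "semigraph A B C \<longleftrightarrow> finite A \<and> finite B \<and> C \<subseteq> A \<times> B \<and>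
     (\<forall>e\<in>B. card {c\<in>C. snd c = e} \<le> 2)"

definition node_deg :: "('a \<times> 'b) set \<Rightarrow> 'a \<Rightarrow> nat" where
  "node_deg C v = card {c\<in>C. fst c = v}"

definition edge_rank :: "('a \<times> 'b) set \<Rightarrow> 'b \<Rightarrow> nat" where
  "edge_rank C e = card {c\<in>C. snd c = e}"

datatype lab = LM | LP | LO | LD

definition N_Pi :: "nat \<Rightarrow> lab multiset set" where
  "N_Pi i = {\<chi>. size \<chi> = i \<and>
     ((count \<chi> LM = 1 \<and> (\<forall>x\<in>#\<chi>. x \<noteq> LM \<longrightarrow> x \<in> {LP, LO, LD})) \<or>
      (\<forall>x\<in>#\<chi>. x \<in> {LO, LD}))}"

definition E_Pi :: "nat \<Rightarrow> lab multiset set" where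
  "E_Pi i = (if i = 0 then {{#}}
            else if i = 1 then {{#LD#}}
            else if i = 2 then {{#LP, LO#}, {#LM, LM#}, {#LP, LP#}}
            else {})"

definition N_Pi_psi :: "nat \<Rightarrow> lab multiset \<Rightarrow> lab multiset set" where
  "N_Pi_psi i \<psi> = {\<chi>. size \<chi> = i \<and> \<chi> + \<psi> \<in> N_Pi (i + size \<psi>)}"

definition L_list :: "nat \<Rightarrow> lab multiset set set" where
  "L_list i = {N_Pi_psi i \<psi> | \<psi> j. \<psi> \<in> N_Pi j}"

definition node_labels :: "('a \<times> 'b) set \<Rightarrow> ('a \<times> 'b \<Rightarrow> lab) \<Rightarrow> 'a \<Rightarrow> lab multiset" where
  "node_labels C h v = image_mset h (mset_set {c\<in>C. fst c = v})"

definition edge_labels :: "('a \<times> 'b) set \<Rightarrow> ('a \<times> 'b \<Rightarrow> lab) \<Rightarrow> 'b \<Rightarrow> lab multiset" where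
  "edge_labels C h e = image_mset h (mset_set {c\<in>C. snd c = e})"

definition valid_input :: "'a set \<Rightarrow> 'b set \<Rightarrow> ('a \<times> 'b) set \<Rightarrow> ('a \<Rightarrow> lab multiset set) \<Rightarrow> bool" where
  "valid_input A B C h_in \<longleftrightarrow> (\<forall>v\<in>A. h_in v \<in> L_list (node_deg C v))"

definition valid_solution :: "'a set \<Rightarrow> 'b set \<Rightarrow> ('a \<times> 'b) set \<Rightarrow> ('a \<Rightarrow> lab multiset set)
    \<Rightarrow> ('a \<times> 'b \<Rightarrow> lab) \<Rightarrow> bool" where
  "valid_solution A B C h_in h_out \<longleftrightarrow>
     (\<forall>v\<in>A. node_labels C h_out v \<in> h_in v) \<and>
     (\<forall>e\<in>B. edge_labels C h_out e \<in> E_Pi (edge_rank C e))"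

end

theory Submission
  imports Defs
begin

lemma psi_mem:
  assumes "\<psi> \<in> N_Pi j" "size \<chi> = d"
    and "(\<forall>x\<in>#\<psi>. x \<in> {LO, LD}) \<longrightarrow> \<chi> \<in> N_Pi d"
    and "\<not>(\<forall>x\<in>#\<psi>. x \<in> {LO, LD}) \<longrightarrow> (LM \<notin># \<chi> \<and> (\<forall>x\<in>#\<chi>. x \<in> {LP, LO, LD}))"
  shows "\<chi> \<in> N_Pi_psi d \<psi>"
proof (cases "\<forall>x\<in>#\<psi>. x \<in> {LO, LD}")
  case True
  then have "LM \<notin># \<psi>" by auto
  then have c: "count \<psi> LM = 0" by (simp add: count_eq_zero_iff)
  from True assms(3) have ch: "\<chi> \<in> N_Pi d" by blast
  have sz: "size (\<chi> + \<psi>) = d + size \<psi>" using assms(2) by simp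
  from ch have "(count \<chi> LM = 1 \<and> (\<forall>x\<in>#\<chi>. x \<noteq> LM \<longrightarrow> x \<in> {LP, LO, LD})) \<or> (\<forall>x\<in>#\<chi>. x \<in> {LO, LD})"
    unfolding N_Pi_def by blast
  then have "(count (\<chi> + \<psi>) LM = 1 \<and> (\<forall>x\<in>#\<chi> + \<psi>. x \<noteq> LM \<longrightarrow> x \<in> {LP, LO, LD})) \<or> (\<forall>x\<in>#\<chi> + \<psi>. x \<in> {LO, LD})"
  proof
    assume h: "count \<chi> LM = 1 \<and> (\<forall>x\<in>#\<chi>. x \<noteq> LM \<longrightarrow> x \<in> {LP, LO, LD})"
    have "count (\<chi> + \<psi>) LM = 1" using h c by simp
    moreover have "\<forall>x\<in>#\<chi> + \<psi>. x \<noteq> LM \<longrightarrow> x \<in> {LP, LO, LD}"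
      using h True by (metis insert_iff set_mset_union Un_iff)
    ultimately show ?thesis by blast
  next
    assume h: "\<forall>x\<in>#\<chi>. x \<in> {LO, LD}"
    have "\<forall>x\<in>#\<chi> + \<psi>. x \<in> {LO, LD}" using h True by (metis set_mset_union Un_iff)
    thus ?thesis by blast
  qed
  with sz assms(2) show ?thesis unfolding N_Pi_psi_def N_Pi_def by blast
next
  case False
  with assms have h: "LM \<notin># \<chi>" "\<forall>x\<in>#\<chi>. x \<in> {LP, LO, LD}" by auto
  from h have c: "count \<chi> LM = 0" by (simp add: count_eq_zero_iff)
  from False assms(1) have p: "count \<psi> LM = 1 \<and> (\<forall>x\<in>#\<psi>. x \<noteq> LM \<longrightarrow> x \<in> {LP, LO, LD})"
    unfolding N_Pi_def by blast
  have sz: "size (\<chi> + \<psi>) = d + size \<psi>" using assms(2) by simp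
  have "count (\<chi> + \<psi>) LM = 1" using p c by simp
  moreover have "\<forall>x\<in>#\<chi> + \<psi>. x \<noteq> LM \<longrightarrow> x \<in> {LP, LO, LD}"
    using h p by (metis set_mset_union Un_iff)
  ultimately show ?thesis using sz assms(2) unfolding N_Pi_psi_def N_Pi_def by blast
qed

lemma count_img_one:
  assumes "finite S" "a \<in> S" "h a = x" "\<forall>c\<in>S - {a}. h c \<noteq> x"
  shows "count (image_mset h (mset_set S)) x = 1"
proof -
  have "S = insert a (S - {a})" using assms by auto
  then have "mset_set S = add_mset a (mset_set (S - {a}))"
    using assms by (metis mset_set.remove)
  moreover have "x \<notin># image_mset h (mset_set (S - {a}))"
    using assms by auto
  ultimately show ?thesis using assms by (simp add: count_eq_zero_iff)
qed

lemma lab_nM: "x \<noteq> LM \<Longrightarrow> x \<in> {LP, LO, LD}"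
  by (cases x) auto

lemma N_Pi_I1: "size \<chi> = n \<Longrightarrow> \<forall>x\<in>#\<chi>. x \<in> {LO, LD} \<Longrightarrow> \<chi> \<in> N_Pi n"
  unfolding N_Pi_def by simp

lemma N_Pi_I2: "size \<chi> = n \<Longrightarrow> count \<chi> LM = 1 \<Longrightarrow> \<chi> \<in> N_Pi n"
  unfolding N_Pi_def using lab_nM by simp

theorem mainTheorem10:
  fixes A :: "'a set" and B :: "'b set" and C :: "('a \<times> 'b) set"
    and h_in :: "'a \<Rightarrow> lab multiset set"
  assumes "semigraph A B C"
    and "valid_input A B C h_in"
  shows "\<exists>h_out. valid_solution A B C h_in h_out"
proof -
  have fA: "finite A" and fB: "finite B" and CAB: "C \<subseteq> A \<times> B"
    and rk: "\<forall>e\<in>B. card {c\<in>C. snd c = e} \<le> 2"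
    using assms(1) unfolding semigraph_def by auto
  have fC: "finite C" using fA fB CAB finite_subset by blast
  define psi where "psi v = (SOME \<psi>. \<exists>j. \<psi> \<in> N_Pi j \<and> h_in v = N_Pi_psi (node_deg C v) \<psi>)" for v
  have psi: "\<exists>j. psi v \<in> N_Pi j \<and> h_in v = N_Pi_psi (node_deg C v) (psi v)" if "v \<in> A" for v
  proof -
    from assms(2) that have "h_in v \<in> L_list (node_deg C v)" unfolding valid_input_def by auto
    then have "\<exists>\<psi> j. \<psi> \<in> N_Pi j \<and> h_in v = N_Pi_psi (node_deg C v) \<psi>"
      unfolding L_list_def by auto
    then show ?thesis unfolding psi_def by (rule someI_ex)
  qed
  define fr where "fr v = (\<forall>x\<in>#psi v. x \<in> {LO, LD})" for v
  define matching where "matching F = ((\<forall>e\<in>F. edge_rank C e = 2 \<and> (\<forall>c\<in>C. snd c = e \<longrightarrow> fr (fst c))) \<and>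
     (\<forall>c\<in>C. \<forall>c'\<in>C. snd c \<in> F \<longrightarrow> snd c' \<in> F \<longrightarrow> fst c = fst c' \<longrightarrow> snd c = snd c'))" for F
  let ?Ms = "{F. F \<subseteq> B \<and> matching F}"
  have "finite ?Ms" using fB by (simp add: finite_subset)
  moreover have "{} \<in> ?Ms" unfolding matching_def by auto
  ultimately have "\<exists>m\<in>?Ms. \<forall>b\<in>?Ms. m \<le> b \<longrightarrow> m = b"
    by (intro finite_has_maximal) auto
  then obtain Mt where Mt: "Mt \<in> ?Ms" and Mmax: "\<forall>F\<in>?Ms. Mt \<le> F \<longrightarrow> Mt = F"
    by blast
  have MtB: "Mt \<subseteq> B" and mMt: "matching Mt" using Mt by auto
  have mrank: "\<And>e. e \<in> Mt \<Longrightarrow> edge_rank C e = 2"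
    using mMt unfolding matching_def by blast
  have mfr: "\<And>c. c \<in> C \<Longrightarrow> snd c \<in> Mt \<Longrightarrow> fr (fst c)"
    using mMt unfolding matching_def by blast
  have mdisj: "\<And>c c'. c \<in> C \<Longrightarrow> c' \<in> C \<Longrightarrow> snd c \<in> Mt \<Longrightarrow> snd c' \<in> Mt \<Longrightarrow> fst c = fst c' \<Longrightarrow> snd c = snd c'"
    using mMt unfolding matching_def by blast
  have labNM: "\<And>x. x \<noteq> LM \<longrightarrow> x \<in> {LP, LO, LD}"
    by (case_tac x) auto
  define matched where "matched v = (\<exists>e\<in>Mt. (v, e) \<in> C)" for v
  define sat where "sat v = (\<not> fr v \<or> matched v)" for v
  define h where "h c = (if snd c \<in> Mt then LM else if edge_rank C (snd c) = 2 then
      (if sat (fst c) then LP else LO) else LD)" for c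
  have "valid_solution A B C h_in h"
    unfolding valid_solution_def
  proof (intro conjI ballI)
    fix v assume vA: "v \<in> A"
    obtain j where pj: "psi v \<in> N_Pi j" and hv: "h_in v = N_Pi_psi (node_deg C v) (psi v)"
      using psi[OF vA] by auto
    define S where "S = {c\<in>C. fst c = v}"
    have fS: "finite S" unfolding S_def using fC by auto
    have Sv: "c \<in> S \<Longrightarrow> c = (v, snd c) \<and> c \<in> C" for c unfolding S_def by (simp add: prod_eq_iff)
    have nl: "node_labels C h v = image_mset h (mset_set S)" unfolding node_labels_def S_def ..
    have sz: "size (node_labels C h v) = node_deg C v" unfolding nl node_deg_def S_def by simp
    have setl: "set_mset (node_labels C h v) = h ` S" unfolding nl using fS by simp
    have hLM: "h c = LM \<longleftrightarrow> snd c \<in> Mt" for c unfolding h_def by simp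
    have "node_labels C h v \<in> N_Pi_psi (node_deg C v) (psi v)"
    proof (rule psi_mem[OF pj sz]; intro impI)
      assume frv: "\<forall>x\<in>#psi v. x \<in> {LO, LD}"
      hence frv': "fr v" unfolding fr_def by simp
      show "node_labels C h v \<in> N_Pi (node_deg C v)"
      proof (cases "matched v")
        case True
        then obtain e0 where e0: "e0 \<in> Mt" "(v, e0) \<in> C" unfolding matched_def by blast
        have uniq: "c = (v, e0)" if cS: "c \<in> S" and cM: "snd c \<in> Mt" for c
        proof -
          have "snd c = snd (v, e0)"
            using mdisj[of c "(v, e0)"] e0 Sv[OF cS] cM by (metis fst_conv snd_conv)
          thus "c = (v, e0)" using Sv[OF cS] by simp
        qed
        have S0: "(v, e0) \<in> S" unfolding S_def using e0 by simp
        have "count (node_labels C h v) LM = 1" unfolding nl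
        proof (rule count_img_one[OF fS S0])
          show "h (v, e0) = LM" using hLM e0 by simp
          show "\<forall>c\<in>S - {(v, e0)}. h c \<noteq> LM" using uniq hLM by blast
        qed
        then show ?thesis by (rule N_Pi_I2[OF sz])
      next
        case False
        have "h c \<in> {LO, LD}" if cS: "c \<in> S" for c
        proof -
          have "snd c \<notin> Mt" using False Sv[OF cS] unfolding matched_def by metis
          moreover have "\<not> sat v" using False frv' unfolding sat_def by simp
          ultimately show ?thesis using Sv[OF cS] unfolding h_def by (metis fst_conv insertCI)
        qed
        then have "\<forall>x\<in>h ` S. x \<in> {LO, LD}" by (intro ballI, elim imageE) simp
        then have "\<forall>x\<in>#node_labels C h v. x \<in> {LO, LD}" unfolding setl .
        then show ?thesis by (rule N_Pi_I1[OF sz])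
      qed
    next
      assume nfr: "\<not>(\<forall>x\<in>#psi v. x \<in> {LO, LD})"
      hence nfr': "\<not> fr v" unfolding fr_def by simp
      have "h c \<noteq> LM" if cS: "c \<in> S" for c
      proof
        assume "h c = LM"
        hence "snd c \<in> Mt" using hLM by simp
        hence "fr (fst c)" using mfr Sv[OF cS] by blast
        thus False using nfr' Sv[OF cS] by (metis fst_conv)
      qed
      hence "\<forall>x\<in>h ` S. x \<noteq> LM" by (intro ballI, elim imageE) simp
      hence "\<forall>x\<in>#node_labels C h v. x \<noteq> LM" unfolding setl .
      thus "LM \<notin># node_labels C h v \<and> (\<forall>x\<in>#node_labels C h v. x \<in> {LP, LO, LD})"
        using lab_nM by blast
    qed
    thus "node_labels C h v \<in> h_in v" using hv by simp
  next
    fix e assume eB: "e \<in> B"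
    define T where "T = {c\<in>C. snd c = e}"
    have fT: "finite T" unfolding T_def using fC by simp
    have Tm: "c \<in> T \<longleftrightarrow> c \<in> C \<and> snd c = e" for c unfolding T_def by simp
    have el: "edge_labels C h e = image_mset h (mset_set T)" unfolding edge_labels_def T_def ..
    have er: "edge_rank C e = card T" unfolding edge_rank_def T_def ..
    have "card T \<le> 2" using rk eB unfolding T_def by blast
    then consider "card T = 0" | "card T = 1" | "card T = 2" by linarith
    then show "edge_labels C h e \<in> E_Pi (edge_rank C e)"
    proof cases
      case 1
      then have "T = {}" using fT by simp
      then show ?thesis unfolding el er E_Pi_def by simp
    next
      case 2
      then obtain a where Ta: "T = {a}" using card_1_singletonE by blast
      have "e \<notin> Mt"
      proof
        assume "e \<in> Mt"
        then have "edge_rank C e = 2" using mrank by blast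
        then show False using 2 er by simp
      qed
      moreover have "snd a = e" using Ta Tm by blast
      ultimately have "h a = LD" unfolding h_def using 2 er by simp
      then show ?thesis unfolding el er E_Pi_def using Ta 2 by simp
    next
      case 3
      then obtain a b where Tab: "T = {a, b}" "a \<noteq> b" unfolding card_2_iff by blast
      have abT: "a \<in> T" "b \<in> T" using Tab(1) by simp_all
      have sa: "snd a = e" "snd b = e" "a \<in> C" "b \<in> C" using abT Tm by simp_all
      have img: "edge_labels C h e = {#h a, h b#}" unfolding el using Tab by simp
      have Tc: "c = a \<or> c = b" if "c \<in> C" "snd c = e" for c
      proof -
        have "c \<in> T" using Tm that by simp
        then show ?thesis using Tab(1) by simp
      qed
      show ?thesis
      proof (cases "e \<in> Mt")
        case True
        then have "h a = LM" "h b = LM" unfolding h_def using sa by simp_all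
        then show ?thesis unfolding img er E_Pi_def using 3 by simp
      next
        case False
        have ha: "h a = (if sat (fst a) then LP else LO)" unfolding h_def using sa False 3 er by simp
        have hb: "h b = (if sat (fst b) then LP else LO)" unfolding h_def using sa False 3 er by simp
        have "sat (fst a) \<or> sat (fst b)"
        proof (rule ccontr)
          assume "\<not> (sat (fst a) \<or> sat (fst b))"
          hence fa: "fr (fst a)" "fr (fst b)" "\<not> matched (fst a)" "\<not> matched (fst b)"
            unfolding sat_def by simp_all
          have um: "snd c' \<notin> Mt" if "c' \<in> C" "fst c' = fst a \<or> fst c' = fst b" for c'
          proof
            assume "snd c' \<in> Mt"
            moreover have "(fst c', snd c') \<in> C" using that by simp
            ultimately have "matched (fst c')" unfolding matched_def by blast
            with fa that show False by metis
          qed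
          have M1: "\<forall>e'\<in>insert e Mt. edge_rank C e' = 2"
            using mrank 3 er by simp
          have M2: "\<forall>e'\<in>insert e Mt. \<forall>c\<in>C. snd c = e' \<longrightarrow> fr (fst c)"
          proof (intro ballI impI)
            fix e' c assume "e' \<in> insert e Mt" "c \<in> C" "snd c = e'"
            then consider "snd c = e" | "snd c \<in> Mt" by blast
            then show "fr (fst c)"
            proof cases
              case 1
              then have "c = a \<or> c = b" using Tc \<open>c \<in> C\<close> by blast
              then show ?thesis using fa by blast
            next
              case 2
              then show ?thesis using mfr \<open>c \<in> C\<close> by blast
            qed
          qed
          have M3: "\<forall>c\<in>C. \<forall>c'\<in>C. snd c \<in> insert e Mt \<longrightarrow> snd c' \<in> insert e Mt \<longrightarrow> fst c = fst c' \<longrightarrow> snd c = snd c'"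
          proof (intro ballI impI)
            fix c c' assume c: "c \<in> C" "c' \<in> C" "snd c \<in> insert e Mt" "snd c' \<in> insert e Mt"
              "fst c = fst c'"
            show "snd c = snd c'"
            proof (cases "snd c = e")
              case True
              then have "c = a \<or> c = b" using Tc c(1) by blast
              then have "fst c' = fst a \<or> fst c' = fst b" using c(5) by metis
              then have "snd c' \<notin> Mt" using um c(2) by blast
              then show ?thesis using True c(4) by simp
            next
              case F: False
              show ?thesis
              proof (cases "snd c' = e")
                case True
                then have "c' = a \<or> c' = b" using Tc c(2) by blast
                then have "fst c = fst a \<or> fst c = fst b" using c(5) by metis
                then have "snd c \<notin> Mt" using um c(1) by blast
                then show ?thesis using F c(3) by simp
              next
                case False
                then have "snd c \<in> Mt" "snd c' \<in> Mt" using F c(3,4) by blast+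
                then show ?thesis using mdisj c(1,2,5) by blast
              qed
            qed
          qed
          have "matching (insert e Mt)"
            unfolding matching_def using M1 M2 M3 by blast
          moreover have "insert e Mt \<subseteq> B" using MtB eB by blast
          ultimately have "insert e Mt \<in> ?Ms" by blast
          moreover have "Mt \<le> insert e Mt" by blast
          ultimately have "Mt = insert e Mt" using Mmax by blast
          thus False using False by blast
        qed
        then consider "sat (fst a)" "sat (fst b)" | "sat (fst a)" "\<not> sat (fst b)"
          | "\<not> sat (fst a)" "sat (fst b)" by blast
        then show ?thesis
        proof cases
          case 1 then show ?thesis unfolding img er E_Pi_def using 3 ha hb by simp
        next
          case 2 then show ?thesis unfolding img er E_Pi_def using 3 ha hb by simp
        next
          case 3 then show ?thesis unfolding img er E_Pi_def using \<open>card T = 2\<close> ha hb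
            by (simp add: add_mset_commute)
        qed
      qed
    qed
  qed
  thus ?thesis by blast
qed

end
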